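(* Let $\Omega_n=\dfrac{\pi^{n/2}}{\Gamma\left(\frac n2+1\right)}$ for $n\in\mathbb{N}_0$. As $n\to\infty$, the following asymptotic series holds: \[ \ln\frac{\Omega_{n-1}}{\Omega_n}=\frac12\ln\frac{n}{2\pi}+\sum_{j=1}^\infty\frac{\mu_j}{n^j},\qquad \mu_j=(-1)^j\left[B_{j+1}\left(\tfrac12\right)-B_{j+1}(1)\right]\frac{2^j}{j(j+1)}\quad(j\in\mathbb{N}), \] where $B_m(x)$ denote the Bernoulli polynomials.
   Context: $\Omega_n$ is the volume of the unit ball in $\mathbb{R}^n$; $\Gamma$ is Euler's gamma function. The Bernoulli polynomials are defined by $\frac{te^{xt}}{e^t-1}=\sum_{m\ge0}B_m(x)\frac{t^m}{m!}$. The equality with an infinite series is meant as an asymptotic expansion: for every $N$, the difference between the left side and $\frac12\ln\frac n{2\pi}+\sum_{j=1}^N\mu_jn^{-j}$ is $O(n^{-N-1})$ as $n\to\infty$. *)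

theory Defs
  imports "HOL-Analysis.Analysis" "HOL-Computational_Algebra.Formal_Power_Series"
    "HOL-Library.Landau_Symbols"
begin

definition Omega :: "nat \<Rightarrow> real" where
  "Omega n = pi powr (real n / 2) / Gamma (real n / 2 + 1)"

text \<open>Bernoulli polynomials via the generating function
  t e^(xt) / (e^t - 1) = sum B_m(x) t^m / m!, read as an identity of formal power series.\<close>
definition bernpoly :: "nat \<Rightarrow> real \<Rightarrow> real" where
  "bernpoly m x = fact m * fps_nth (fps_X * fps_exp x / (fps_exp 1 - 1)) m"

definition mu :: "nat \<Rightarrow> real" where
  "mu j = (-1) ^ j * (bernpoly (j + 1) (1/2) - bernpoly (j + 1) 1) * 2 ^ j / (real j * real (j + 1))"

end

theory Submission
  imports Defs "HOL-Real_Asymp.Real_Asymp"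
begin

lemma bern_fps_eq:
  fixes y :: real
  shows "(fps_X * fps_exp y / (fps_exp 1 - 1)) * (fps_exp 1 - 1) = fps_X * fps_exp y"
proof -
  let ?G = "fps_exp (1::real) - 1"
  let ?H = "fps_X * fps_exp y"
  have G1: "fps_nth ?G 1 = 1" by simp
  have G0: "?G \<noteq> 0" proof assume "?G = 0" then have "fps_nth ?G 1 = 0" by simp with G1 show False by simp qed
  have H0: "?H \<noteq> 0" proof assume "?H = 0" then have "fps_nth ?H 1 = 0" by simp then show False by simp qed
  have sG: "subdegree ?G = 1" by (rule subdegreeI) auto
  have sH: "subdegree ?H = 1" by (rule subdegreeI) auto
  have "?G dvd ?H" using fps_dvd_iff[OF G0 H0] sG sH by simp
  then show ?thesis by simp
qed

lemma bern_rec: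
  fixes y :: real
  shows "(\<Sum>m\<le>p. real (Suc p choose m) * bernpoly m y) = real (Suc p) * y^p"
proof -
  let ?F = "fps_X * fps_exp y / (fps_exp 1 - 1)"
  have "fps_nth (?F * (fps_exp 1 - 1)) (Suc p) = fps_nth (fps_X * fps_exp y) (Suc p)"
    by (simp only: bern_fps_eq)
  moreover have "fps_nth (?F * (fps_exp 1 - 1)) (Suc p) = (\<Sum>i=0..Suc p. fps_nth ?F i * fps_nth (fps_exp 1 - 1) (Suc p - i))"
    by (rule fps_mult_nth)
  moreover have "fps_nth (fps_X * fps_exp y) (Suc p) = y^p / fact p" by simp
  ultimately have "(\<Sum>i=0..Suc p. fps_nth ?F i * fps_nth (fps_exp 1 - 1) (Suc p - i)) = y^p / fact p"
    by simp
  also have "(\<Sum>i=0..Suc p. fps_nth ?F i * fps_nth (fps_exp 1 - 1) (Suc p - i))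
        = (\<Sum>i\<le>p. fps_nth ?F i * (1 / fact (Suc p - i)))"
    by (subst sum.atLeast0_atMost_Suc) (auto simp: atLeast0AtMost intro!: sum.cong)
  finally have e: "(\<Sum>i\<le>p. fps_nth ?F i * (1 / fact (Suc p - i))) = y^p / fact p" .
  have "(\<Sum>m\<le>p. real (Suc p choose m) * bernpoly m y)
       = (\<Sum>m\<le>p. fact (Suc p) * (fps_nth ?F m * (1 / fact (Suc p - m))))"
    by (intro sum.cong refl) (simp add: bernpoly_def binomial_fact field_simps)
  also have "\<dots> = fact (Suc p) * (y^p / fact p)"
    by (subst sum_distrib_left[symmetric]) (simp only: e)
  also have "\<dots> = real (Suc p) * y^p" by (simp add: field_simps)
  finally show ?thesis .
qed

definition D :: "nat \<Rightarrow> real" where "D m = bernpoly m (1/2) - bernpoly m 1"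
definition cc :: "nat \<Rightarrow> real" where
  "cc k = (-1)^k * D (k+1) / (real k * real (k+1))"
definition AA :: "nat \<Rightarrow> real" where
  "AA j = (if j = 0 then 0 else (-1)^(j+1) / real j * (1/2 - (1/2)^j))"

lemma bern0: "bernpoly 0 y = 1"
  using bern_rec[of 0 y] by simp

lemma bern1: "bernpoly 1 y = y - 1/2"
  using bern_rec[of 1 y] by (simp add: bern0 numeral_2_eq_2 atMost_Suc)

lemma bern1': "bernpoly (Suc 0) y = y - 1/2" using bern1 by simp

lemma D_rec: "(\<Sum>m\<le>p. real (Suc p choose m) * D m) = real (Suc p) * ((1/2)^p - 1)"
  using bern_rec[of p "1/2"] bern_rec[of p 1]
  by (simp add: D_def right_diff_distrib sum_subtractf)

lemma D_rec2:
  assumes "1 \<le> p"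
  shows "(\<Sum>k=1..p-1. real (Suc p choose (k+1)) * D (k+1)) = real (Suc p) * ((1/2)^p - 1/2)"
proof -
  have "(\<Sum>m\<le>p. real (Suc p choose m) * D m) = (\<Sum>m\<in>{0,1}. real (Suc p choose m) * D m)
        + (\<Sum>m=2..p. real (Suc p choose m) * D m)"
  proof -
    have "{..p} = {0,1} \<union> {2..p}" using assms by auto
    then show ?thesis by (simp add: sum.union_disjoint)
  qed
  moreover have "(\<Sum>m\<in>{0,1}. real (Suc p choose m) * D m) = - real (Suc p) / 2"
    by (simp add: D_def bern0 bern1' field_simps)
  moreover have "(\<Sum>m=2..p. real (Suc p choose m) * D m) = (\<Sum>k=1..p-1. real (Suc p choose (k+1)) * D (k+1))"
    using assms by (intro sum.reindex_bij_witness[of _ "\<lambda>k. k+1" "\<lambda>m. m-1"]) auto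
  ultimately have "(\<Sum>k=1..p-1. real (Suc p choose (k+1)) * D (k+1)) = real (Suc p) * ((1/2)^p - 1) + real (Suc p) / 2"
    using D_rec[of p] by linarith
  moreover have "real (Suc p) * ((1/2)^p - 1) + real (Suc p) / 2 = real (Suc p) * ((1/2::real)^p - 1/2)"
    by (simp add: algebra_simps)
  ultimately show ?thesis by (rule trans)
qed

lemma gen_frac:
  fixes a1 b1 u1 v1 w1 z1 :: real
  assumes "u1 * v1 * a1 = b1 * w1 * z1" "u1 \<noteq> 0" "v1 \<noteq> 0" "w1 \<noteq> 0" "z1 \<noteq> 0"
  shows "a1/(w1*z1) = b1/(u1 * v1)"
  using assms by (simp add: field_simps)

lemma binom_aux:
  assumes "1 \<le> k" "k \<le> p - 1" "1 \<le> p"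
  shows "real ((p-1) choose (k-1)) / (real k * real (k+1)) = real (Suc p choose (k+1)) / (real p * real (p+1))"
proof -
  obtain q j where q: "p = Suc q" and j: "k = Suc j" using assms by (cases p; cases k) auto
  have "Suc q * (q choose j) = (Suc q choose Suc j) * Suc j" by (rule Suc_times_binomial_eq)
  moreover have "Suc (Suc q) * (Suc q choose Suc j) = (Suc (Suc q) choose Suc (Suc j)) * Suc (Suc j)"
    by (rule Suc_times_binomial_eq)
  ultimately have E: "real (Suc q) * real (Suc (Suc q)) * real (q choose j) =
      real (Suc (Suc q) choose Suc (Suc j)) * real (Suc j) * real (Suc (Suc j))"
    by (metis (no_types, lifting) mult.assoc mult.commute of_nat_mult)
  have "real (q choose j) / (real (Suc j) * real (Suc (Suc j))) = real (Suc (Suc q) choose Suc (Suc j)) / (real (Suc q) * real (Suc (Suc q)))"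
    by (rule gen_frac[OF E]) auto
  then show ?thesis using q j by (simp del: binomial_Suc_Suc of_nat_Suc)
qed

lemma term_id:
  assumes "1 \<le> k" "k \<le> p - 1" "1 \<le> p"
  shows "cc k * ((- real k) gchoose (p - k)) = (-1)^p * real (Suc p choose (k+1)) * D (k+1) / (real p * real (p+1))"
proof -
  have g: "(- real k) gchoose (p - k) = (-1)^(p-k) * real ((p-1) choose (k-1))"
  proof -
    have "(- real k) gchoose (p - k) = (-1)^(p-k) * ((real k + real (p-k) - 1) gchoose (p-k))"
      by (rule gbinomial_minus)
    also have "real k + real (p-k) - 1 = real (p - 1)" using assms by simp
    also have "(real (p-1) gchoose (p-k)) = real ((p-1) choose (p-k))" by (simp add: binomial_gbinomial)
    also have "(p-1) choose (p-k) = (p-1) choose (k-1)"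
    proof -
      have h: "(p-1) choose (k-1) = (p-1) choose (p-1-(k-1))" by (rule binomial_symmetric) (use assms in simp)
      have eq: "p - 1 - (k - 1) = p - k" using assms by simp
      show ?thesis using h unfolding eq by simp
    qed
    finally show ?thesis .
  qed
  have s: "(-1::real)^k * (-1)^(p-k) = (-1)^p"
    using assms by (simp add: power_add[symmetric])
  have "cc k * ((- real k) gchoose (p - k)) = ((-1)^k * (-1)^(p-k)) * D (k+1) *
        (real ((p-1) choose (k-1)) / (real k * real (k+1)))"
    unfolding cc_def g by (simp add: mult_ac)
  also have "\<dots> = (-1)^p * D (k+1) * (real (Suc p choose (k+1)) / (real p * real (p+1)))"
    by (simp only: s binom_aux[OF assms])
  finally show ?thesis by simp
qed

lemma gen_cancel:
  fixes s h q :: real assumes "q > 0"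
  shows "s/(q*(q+1)) * ((q+1)*(h-1/2)) = - s*(1/2-h)/q"
proof -
  have "q + 1 \<noteq> 0" "q \<noteq> 0" using assms by auto
  then show ?thesis by (simp add: divide_simps) (simp add: algebra_simps)
qed

lemma coef_id:
  assumes "1 \<le> p"
  shows "(\<Sum>k=1..p-1. cc k * ((- real k) gchoose (p - k))) = AA p"
proof -
  have "(\<Sum>k=1..p-1. cc k * ((- real k) gchoose (p - k)))
     = (\<Sum>k=1..p-1. ((-1)^p / (real p * real (p+1))) * (real (Suc p choose (k+1)) * D (k+1)))"
    using assms by (intro sum.cong refl) (simp add: term_id)
  also have "\<dots> = ((-1)^p / (real p * real (p+1))) * (real (Suc p) * ((1/2)^p - 1/2))"
    by (simp only: sum_distrib_left[symmetric] D_rec2[OF assms])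
  also have "\<dots> = AA p"
  proof -
    have gen: "\<And>s h. s / (real p * real (p+1)) * (real (Suc p) * (h - 1/2)) = - s * (1/2 - h) / real p"
    proof -
      fix s h
      have "real p > 0" using assms by simp
      then show "s / (real p * real (p+1)) * (real (Suc p) * (h - 1/2)) = - s * (1/2 - h) / real p"
        using gen_cancel[of "real p" s h] by simp
    qed
    show ?thesis using assms by (simp only: gen AA_def) simp
  qed
  finally show ?thesis .
qed

definition ff :: "real \<Rightarrow> real" where
  "ff x = ln (Gamma (x+1)) - ln (Gamma (x + 1/2)) - ln x / 2"
definition gg :: "real \<Rightarrow> real" where
  "gg x = ln (x+1) / 2 + ln x / 2 - ln (x + 1/2)"

lemma lnG_plus1:
  fixes x :: real assumes "x > 0"
  shows "ln (Gamma (x+1)) = ln (Gamma x) + ln x"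
proof -
  have "x \<notin> \<int>\<^sub>\<le>\<^sub>0" using assms by (auto elim!: nonpos_Ints_cases)
  then have e: "Gamma (x+1) = x * Gamma x" by (rule Gamma_plus1)
  have gp: "Gamma x > 0" using assms by simp
  have "ln (Gamma (x+1)) = ln x + ln (Gamma x)" unfolding e by (rule ln_mult_pos[OF assms gp])
  then show ?thesis by simp
qed

lemma ff_diff:
  fixes x :: real assumes "x > 0"
  shows "ff (x+1) - ff x = gg x"
proof -
  have a: "ln (Gamma (x+1+1)) = ln (Gamma (x+1)) + ln (x+1)" using assms lnG_plus1[of "x+1"] by simp
  have b: "ln (Gamma (x+1+1/2)) = ln (Gamma (x+1/2)) + ln (x+1/2)" using assms lnG_plus1[of "x+1/2"]
    by (simp add: add_ac)
  show ?thesis unfolding ff_def gg_def using a b by (simp add: add_ac)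
qed

lemma ff_bounds:
  fixes x :: real assumes "x > 0"
  shows "0 \<le> ff x" "ff x \<le> (ln (x + 1/2) - ln x) / 2"
proof -
  let ?p = "ln \<circ> Gamma :: real \<Rightarrow> real"
  have cv: "convex_on {0<..} ?p" by (rule log_convex_Gamma_real)
  have 1: "?p ((1 - 1/2) *\<^sub>R x + (1/2) *\<^sub>R (x+1)) \<le> (1 - 1/2) * ?p x + (1/2) * ?p (x+1)"
    by (rule convex_onD[OF cv]) (use assms in auto)
  have 2: "?p ((1 - 1/2) *\<^sub>R (x+1/2) + (1/2) *\<^sub>R (x+3/2)) \<le> (1 - 1/2) * ?p (x+1/2) + (1/2) * ?p (x+3/2)"
    by (rule convex_onD[OF cv]) (use assms in auto)
  have e1: "(1 - 1/2) *\<^sub>R x + (1/2) *\<^sub>R (x+1) = x + 1/2" by (simp add: field_simps)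
  have e2: "(1 - 1/2) *\<^sub>R (x+1/2) + (1/2) *\<^sub>R (x+3/2) = x + 1" by (simp add: field_simps)
  have a: "ln (Gamma (x+1)) = ln (Gamma x) + ln x" using lnG_plus1 assms by simp
  have b: "ln (Gamma (x+3/2)) = ln (Gamma (x+1/2)) + ln (x+1/2)"
    using assms lnG_plus1[of "x+1/2"] by (simp add: add_ac)
  from 1 a show "0 \<le> ff x" unfolding e1 ff_def comp_def by (simp add: field_simps)
  from 2 b show "ff x \<le> (ln (x + 1/2) - ln x) / 2" unfolding e2 ff_def comp_def by (simp add: field_simps)
qed

lemma ff_lim: "(ff \<longlongrightarrow> 0) at_top"
proof (rule tendsto_sandwich[of "\<lambda>_. 0" _ _ "\<lambda>x. (ln (x + 1/2) - ln x) / 2"])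
  show "\<forall>\<^sub>F x in at_top. 0 \<le> ff x"
    by (rule eventually_mono[OF eventually_gt_at_top[of 0]]) (rule ff_bounds(1))
  show "\<forall>\<^sub>F x in at_top. ff x \<le> (ln (x + 1/2) - ln x) / 2"
    by (rule eventually_mono[OF eventually_gt_at_top[of 0]]) (rule ff_bounds(2))
  show "((\<lambda>x::real. (ln (x + 1/2) - ln x) / 2) \<longlongrightarrow> 0) at_top" by real_asymp
qed simp

lemma one_div_mult: "(1::real)/(a*b) = 1/a*(1/b)" by simp

lemma sum_bound:
  fixes x :: real assumes "x \<ge> 2"
  shows "(\<Sum>i<K. 1 / (x + real i)^(N+2)) \<le> 2 / x^(N+1)"
proof -
  have "(\<Sum>i<K. 1 / (x + real i)^(N+2)) \<le> (\<Sum>i<K. 1/x^N * ((- 1/(x + real (Suc i) - 1)) - (- 1/(x + real i - 1))))"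
  proof (intro sum_mono)
    fix i assume "i \<in> {..<K}"
    have xi: "x + real i \<ge> 2" using assms by simp
    have "(x + real i)^(N+2) = (x + real i)^N * (x+real i)^2" by (rule power_add)
    then have "1 / (x + real i)^(N+2) = 1/(x + real i)^N * (1/(x+real i)^2)" by (simp only: one_div_mult)
    also have "\<dots> \<le> 1/x^N * (1/((x+real i - 1) * (x + real i)))"
    proof (intro mult_mono)
      show "1/(x + real i)^N \<le> 1/x^N" using assms by (intro divide_left_mono power_mono) auto
      have le: "(x+real i - 1) * (x + real i) \<le> (x+real i)^2" using xi
        by (simp add: power2_eq_square mult_right_mono)
      show "1/(x+real i)^2 \<le> 1/((x+real i - 1) * (x + real i))" using xi
        by (intro divide_left_mono[OF le]) auto
    qed (use assms in auto)
    also have "1/((x+real i - 1) * (x + real i)) = (- 1/(x + real (Suc i) - 1)) - (- 1/(x + real i - 1))"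
      using xi by (simp add: field_simps)
    finally show "1 / (x + real i)^(N+2) \<le> 1/x^N * ((- 1/(x + real (Suc i) - 1)) - (- 1/(x + real i - 1)))" .
  qed
  also have "\<dots> = 1/x^N * ((- 1/(x + real K - 1)) - (- 1/(x + real 0 - 1)))"
    by (subst sum_distrib_left[symmetric], subst sum_lessThan_telescope[where f = "\<lambda>i. - 1/(x + real i - 1)"]) simp
  also have "\<dots> \<le> 1/x^N * (1/(x-1))"
    using assms by (intro mult_left_mono) auto
  also have "\<dots> \<le> 1/x^N * (2/x)"
    using assms by (intro mult_left_mono) (auto simp: field_simps)
  also have "\<dots> = 2 / x^(N+1)" by simp
  finally show ?thesis .
qed

definition bb :: "nat \<Rightarrow> nat \<Rightarrow> real" where
  "bb k j = (if k \<le> j then ((- real k) gchoose (j-k)) else 0) - (if j = k then 1 else 0)"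
definition EE :: "nat \<Rightarrow> nat \<Rightarrow> real" where
  "EE N j = AA j - (\<Sum>k=1..N. cc k * bb k j)"
definition Gu :: "nat \<Rightarrow> real \<Rightarrow> real" where
  "Gu N u = ln (1+u)/2 - ln (1+u/2) - (\<Sum>k=1..N. cc k * (u^k * (1+u) powr (- real k) - u^k))"

lemma aux_alg:
  fixes a v w m :: real assumes "m \<noteq> 0"
  shows "1/2 * (- (a * v) / m) - (- (a * v * w) / m) = (- a) / m * (1/2 - w) * v"
  using assms by (simp add: field_simps)

lemma ser_g:
  fixes u :: real assumes "0 < u" "u < 1"
  shows "(\<lambda>j. AA j * u^j) sums (ln (1+u)/2 - ln (1+u/2))"
proof -
  have a: "(\<lambda>n. - ((-u)^n) / of_nat n) sums ln (1 + u)" using assms by (intro ln_series') auto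
  have b: "(\<lambda>n. - ((-(u/2))^n) / of_nat n) sums ln (1 + u/2)" using assms by (intro ln_series') auto
  have c: "(\<lambda>n. 1/2 * (- ((-u)^n) / of_nat n) - (- ((-(u/2))^n) / of_nat n)) sums (1/2 * ln (1+u) - ln (1+u/2))"
    by (intro sums_diff sums_mult a b)
  have "(\<lambda>n. 1/2 * (- ((-u)^n) / of_nat n) - (- ((-(u/2))^n) / of_nat n)) = (\<lambda>j. AA j * u^j)"
  proof
    fix n
    show "1/2 * (- ((-u)^n) / of_nat n) - (- ((-(u/2))^n) / of_nat n) = AA n * u^n"
    proof (cases "n = 0")
      case True then show ?thesis by (simp add: AA_def)
    next
      case False
      have eq1: "(-u)^n = (-1)^n * u^n" by (rule power_minus)
      have h2: "(u/2)^n = u^n * (1/2)^n" by (simp add: power_divide)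
      have eq2: "(-(u/2))^n = (-1)^n * u^n * (1/2)^n"
        by (simp only: power_minus[of "u/2"] h2 mult.assoc)
      have l: "1/2 * (- ((-u)^n) / of_nat n) - (- ((-(u/2))^n) / of_nat n)
          = 1/2 * (- ((-1)^n * u^n) / of_nat n) - (- ((-1)^n * u^n * (1/2)^n) / of_nat n)"
        by (simp only: eq1 eq2)
      have r: "AA n * u^n = (- ((-1)^n)) / of_nat n * (1/2 - (1/2)^n) * u^n"
        using False by (simp add: AA_def)
      show ?thesis unfolding l r using False by (intro aux_alg) simp
    qed
  qed
  with c show ?thesis by simp
qed

lemma ser_b:
  fixes u :: real assumes "0 < u" "u < 1"
  shows "(\<lambda>j. bb k j * u^j) sums (u^k * (1+u) powr (- real k) - u^k)"
proof -
  have a: "(\<lambda>n. ((- real k) gchoose n) * u^n) sums (1 + u) powr (- real k)"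
    using assms by (intro gen_binomial_real) auto
  have a2: "(\<lambda>n. u^k * (((- real k) gchoose n) * u^n)) sums (u^k * (1 + u) powr (- real k))"
    by (rule sums_mult[OF a])
  define f where "f j = (if k \<le> j then ((- real k) gchoose (j-k)) * u^j else 0)" for j
  have "(\<lambda>i. f (i+k)) = (\<lambda>n. u^k * (((- real k) gchoose n) * u^n))"
    by (rule ext) (simp add: f_def power_add)
  with a2 have "(\<lambda>i. f (i+k)) sums (u^k * (1 + u) powr (- real k))" by simp
  then have b: "f sums (u^k * (1 + u) powr (- real k))"
    by (subst (asm) sums_zero_iff_shift) (auto simp: f_def)
  have c: "(\<lambda>j. if j = k then u^j else 0) sums u^k" by (rule sums_single)
  have d: "(\<lambda>j. f j - (if j = k then u^j else 0)) sums (u^k * (1+u) powr (- real k) - u^k)"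
    by (rule sums_diff[OF b c])
  have "(\<lambda>j. f j - (if j = k then u^j else 0)) = (\<lambda>j. bb k j * u^j)"
    by (rule ext) (simp add: f_def bb_def left_diff_distrib)
  with d show ?thesis by simp
qed

lemma ser_G:
  fixes u :: real assumes "0 < u" "u < 1"
  shows "(\<lambda>j. EE N j * u^j) sums Gu N u"
proof -
  have s: "(\<lambda>j. \<Sum>k=1..N. cc k * (bb k j * u^j)) sums (\<Sum>k=1..N. cc k * (u^k * (1+u) powr (- real k) - u^k))"
    by (intro sums_sum sums_mult ser_b assms)
  have d: "(\<lambda>j. AA j * u^j - (\<Sum>k=1..N. cc k * (bb k j * u^j))) sums Gu N u"
    unfolding Gu_def by (rule sums_diff[OF ser_g[OF assms] s])
  have "(\<lambda>j. AA j * u^j - (\<Sum>k=1..N. cc k * (bb k j * u^j))) = (\<lambda>j. EE N j * u^j)"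
    by (rule ext) (simp add: EE_def left_diff_distrib sum_distrib_right mult.assoc)
  with d show ?thesis by simp
qed

lemma EE_zero:
  assumes "j \<le> N + 1"
  shows "EE N j = 0"
proof (cases "j = 0")
  case True
  then show ?thesis by (simp add: EE_def AA_def bb_def)
next
  case False
  then have j1: "1 \<le> j" by simp
  have split: "{1..N} = {1..j-1} \<union> {j..N}" using assms j1 by auto
  have "(\<Sum>k=1..N. cc k * bb k j) = (\<Sum>k=1..j-1. cc k * bb k j) + (\<Sum>k=j..N. cc k * bb k j)"
    unfolding split by (rule sum.union_disjoint) auto
  also have "(\<Sum>k=j..N. cc k * bb k j) = 0"
    by (intro sum.neutral) (auto simp: bb_def)
  also have "(\<Sum>k=1..j-1. cc k * bb k j) = (\<Sum>k=1..j-1. cc k * ((- real k) gchoose (j - k)))"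
    by (intro sum.cong refl) (auto simp: bb_def)
  also have "\<dots> = AA j" by (rule coef_id[OF j1])
  finally show ?thesis by (simp add: EE_def)
qed

lemma Gu_bound:
  "\<exists>S. \<forall>u::real. 0 < u \<longrightarrow> u \<le> 1/2 \<longrightarrow> \<bar>Gu N u\<bar> \<le> S * (2*u)^(N+2)"
proof -
  define S where "S = (\<Sum>j. \<bar>EE N j\<bar> * (1/2)^j)"
  have sum34: "summable (\<lambda>j. EE N j * (3/4)^j)"
    using ser_G[of "3/4" N] by (simp add: sums_summable)
  have "summable (\<lambda>j. norm (EE N j * (1/2)^j))"
    by (rule powser_insidea[OF sum34]) simp
  then have sumS: "summable (\<lambda>j. \<bar>EE N j\<bar> * (1/2)^j)"
    by (simp add: abs_mult power_abs)
  show ?thesis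
  proof (intro exI allI impI)
    fix u :: real assume u: "0 < u" "u \<le> 1/2"
    have G: "Gu N u = (\<Sum>j. EE N j * u^j)" using ser_G[of u N] u by (simp add: sums_iff)
    have "norm (\<Sum>j. EE N j * u^j) \<le> (\<Sum>j. (2*u)^(N+2) * (\<bar>EE N j\<bar> * (1/2)^j))"
    proof (rule norm_suminf_le)
      fix j
      show "norm (EE N j * u^j) \<le> (2*u)^(N+2) * (\<bar>EE N j\<bar> * (1/2)^j)"
      proof (cases "j \<le> N + 1")
        case True then show ?thesis using u by (simp add: EE_zero)
      next
        case False
        have e0: "(1/2)^j * (2*u)^j = (1/2 * (2*u))^j" by (rule power_mult_distrib[symmetric])
        have e: "u^j = (1/2)^j * (2*u)^j" unfolding e0 by simp
        have "(2*u)^j \<le> (2*u)^(N+2)" using u False by (intro power_decreasing) auto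
        then have "\<bar>EE N j\<bar> * ((1/2)^j * (2*u)^j) \<le> \<bar>EE N j\<bar> * ((1/2)^j * (2*u)^(N+2))"
          by (intro mult_left_mono) auto
        have n: "norm (EE N j * u^j) = \<bar>EE N j\<bar> * ((1/2)^j * (2*u)^j)"
          using u by (simp only: real_norm_def abs_mult e power_abs abs_of_pos)
        have r: "\<bar>EE N j\<bar> * ((1/2)^j * (2*u)^(N+2)) = (2*u)^(N+2) * (\<bar>EE N j\<bar> * (1/2)^j)"
          by (simp only: mult_ac)
        show ?thesis unfolding n r[symmetric] by fact
      qed
    next
      show "summable (\<lambda>j. (2*u)^(N+2) * (\<bar>EE N j\<bar> * (1/2)^j))"
        by (rule summable_mult[OF sumS])
    qed
    also have "\<dots> = (2*u)^(N+2) * S" unfolding S_def by (rule suminf_mult[OF sumS])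
    finally show "\<bar>Gu N u\<bar> \<le> S * (2*u)^(N+2)" using G by (simp add: mult.commute)
  qed
qed

definition PP :: "nat \<Rightarrow> real \<Rightarrow> real" where
  "PP N x = (\<Sum>k=1..N. cc k / x^k)"
definition rr :: "nat \<Rightarrow> real \<Rightarrow> real" where
  "rr N x = ff x - PP N x"

lemma G_eq:
  fixes x :: real assumes "x \<ge> 2"
  shows "gg x - (PP N (x+1) - PP N x) = Gu N (1/x)"
proof -
  have x0: "x > 0" using assms by simp
  have p: "0 < 1 + 1/x" using x0 by (metis add_pos_pos zero_less_one zero_less_divide_1_iff)
  have "0 < 1/x/2" using x0 by simp
  then have p2: "0 < 1 + 1/x/2" by linarith
  have l1: "ln (x+1) = ln x + ln (1 + 1/x)"
  proof -
    have "x + 1 = x * (1 + 1/x)" using x0 by (simp add: field_simps)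
    then have "ln (x+1) = ln (x * (1 + 1/x))" by simp
    also have "\<dots> = ln x + ln (1 + 1/x)" using x0 p by (intro ln_mult_pos) auto
    finally show ?thesis .
  qed
  have l2: "ln (x+1/2) = ln x + ln (1 + 1/x/2)"
  proof -
    have "x + 1/2 = x * (1 + 1/x/2)" using x0 by (simp add: field_simps)
    then have "ln (x+1/2) = ln (x * (1 + 1/x/2))" by simp
    also have "\<dots> = ln x + ln (1 + 1/x/2)" using x0 p2 by (intro ln_mult_pos) auto
    finally show ?thesis .
  qed
  have t: "cc k / (x+1)^k - cc k / x^k = cc k * ((1/x)^k * (1 + 1/x) powr (- real k) - (1/x)^k)" for k
  proof -
    have p: "(1 + 1/x) powr (- real k) = 1 / (1 + 1/x)^k"
      by (simp only: powr_minus_divide powr_realpow[OF p])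
    have "(1/x)^k * (1 / (1 + 1/x)^k) = 1 / (x+1)^k"
      using x0 by (simp add: power_divide field_simps power_mult_distrib[symmetric])
    then show ?thesis unfolding p by (simp add: field_simps)
  qed
  have "PP N (x+1) - PP N x = (\<Sum>k=1..N. cc k * ((1/x)^k * (1 + 1/x) powr (- real k) - (1/x)^k))"
    unfolding PP_def sum_subtractf[symmetric] using t by simp
  then show ?thesis unfolding gg_def Gu_def l1 l2 by (simp add: field_simps)
qed

lemma G_bound: "\<exists>C\<ge>0. \<forall>x::real. x \<ge> 2 \<longrightarrow> \<bar>gg x - (PP N (x+1) - PP N x)\<bar> \<le> C / x^(N+2)"
proof -
  obtain S where S: "\<And>u::real. 0 < u \<Longrightarrow> u \<le> 1/2 \<Longrightarrow> \<bar>Gu N u\<bar> \<le> S * (2*u)^(N+2)"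
    using Gu_bound[of N] by blast
  show ?thesis
  proof (intro exI[of _ "\<bar>S\<bar> * 2^(N+2)"] conjI allI impI)
    fix x :: real assume x: "x \<ge> 2"
    have "\<bar>gg x - (PP N (x+1) - PP N x)\<bar> = \<bar>Gu N (1/x)\<bar>" using G_eq[OF x] by simp
    also have "\<dots> \<le> S * (2*(1/x))^(N+2)" using x by (intro S) auto
    also have "\<dots> \<le> \<bar>S\<bar> * (2*(1/x))^(N+2)" using x by (intro mult_right_mono) auto
    also have "\<dots> = \<bar>S\<bar> * 2^(N+2) / x^(N+2)" by (simp add: power_mult_distrib power_divide)
    finally show "\<bar>gg x - (PP N (x+1) - PP N x)\<bar> \<le> \<bar>S\<bar> * 2^(N+2) / x^(N+2)" .
  qed simp
qed

lemma rr_tele: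
  fixes x :: real assumes "x > 0"
  shows "rr N x = rr N (x + real K) - (\<Sum>i<K. gg (x + real i) - (PP N (x + real i + 1) - PP N (x + real i)))"
proof (induction K)
  case 0 then show ?case by simp
next
  case (Suc K)
  have "rr N (x + real (Suc K)) - rr N (x + real K) = gg (x + real K) - (PP N (x + real K + 1) - PP N (x + real K))"
    using ff_diff[of "x + real K"] assms unfolding rr_def by (simp add: add_ac)
  with Suc show ?case by simp
qed

lemma PP_lim: "((\<lambda>y. PP N y) \<longlongrightarrow> 0) at_top"
proof -
  have "((\<lambda>y. \<Sum>k=1..N. cc k / y^k) \<longlongrightarrow> (\<Sum>k=1..N. (0::real))) at_top"
  proof (intro tendsto_sum)
    fix k assume "k \<in> {1..N}"
    then have k: "0 < k" by simp
    have "filterlim (\<lambda>y::real. y^k) at_top at_top"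
      by (rule filterlim_pow_at_top[OF k filterlim_ident])
    then show "((\<lambda>y. cc k / y^k) \<longlongrightarrow> 0) at_top"
      by (intro tendsto_divide_0[OF tendsto_const] filterlim_at_top_imp_at_infinity)
  qed
  then show ?thesis unfolding PP_def by simp
qed

lemma rr_bound: "\<exists>B. \<forall>x::real. x \<ge> 2 \<longrightarrow> \<bar>rr N x\<bar> \<le> B / x^(N+1)"
proof -
  obtain C where C0: "C \<ge> 0" and C: "\<And>x::real. x \<ge> 2 \<Longrightarrow> \<bar>gg x - (PP N (x+1) - PP N x)\<bar> \<le> C / x^(N+2)"
    using G_bound[of N] by blast
  show ?thesis
  proof (intro exI allI impI)
    fix x :: real assume x: "x \<ge> 2"
    have rlim: "((\<lambda>y. rr N y) \<longlongrightarrow> 0) at_top"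
      using tendsto_diff[OF ff_lim PP_lim[of N]] unfolding rr_def by simp
    have fl: "filterlim (\<lambda>K::nat. x + real K) at_top sequentially"
      by (rule filterlim_tendsto_add_at_top[OF tendsto_const filterlim_real_sequentially])
    have seq: "(\<lambda>K. rr N (x + real K)) \<longlonglongrightarrow> 0"
      by (rule filterlim_compose[OF rlim fl])
    have seq2: "(\<lambda>K. \<bar>rr N (x + real K)\<bar> + C * (2 / x^(N+1))) \<longlonglongrightarrow> \<bar>0\<bar> + C * (2 / x^(N+1))"
      by (intro tendsto_intros seq)
    show "\<bar>rr N x\<bar> \<le> (2 * C) / x^(N+1)"
    proof -
      have "\<bar>rr N x\<bar> \<le> \<bar>0\<bar> + C * (2 / x^(N+1))"
      proof (rule LIMSEQ_le_const[OF seq2], intro exI allI impI)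
        fix K :: nat
        have "\<bar>rr N x\<bar> \<le> \<bar>rr N (x + real K)\<bar> + \<bar>\<Sum>i<K. gg (x + real i) - (PP N (x + real i + 1) - PP N (x + real i))\<bar>"
          using rr_tele[of x N K] x by simp
        also have "\<bar>\<Sum>i<K. gg (x + real i) - (PP N (x + real i + 1) - PP N (x + real i))\<bar>
            \<le> (\<Sum>i<K. \<bar>gg (x + real i) - (PP N (x + real i + 1) - PP N (x + real i))\<bar>)"
          by (rule sum_abs)
        also have "\<dots> \<le> (\<Sum>i<K. C * (1 / (x + real i)^(N+2)))"
          using x by (intro sum_mono) (use C in auto)
        also have "\<dots> = C * (\<Sum>i<K. 1 / (x + real i)^(N+2))" by (simp add: sum_distrib_left)
        also have "\<dots> \<le> C * (2 / x^(N+1))"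
          using C0 sum_bound[OF x] by (intro mult_left_mono) auto
        finally show "\<bar>rr N x\<bar> \<le> \<bar>rr N (x + real K)\<bar> + C * (2 / x^(N+1))" by simp
      qed
      then show ?thesis by (simp add: mult.commute)
    qed
  qed
qed

lemma mu_eq: "mu j / real n ^ j = cc j / (real n / 2) ^ j"
  by (simp add: mu_def cc_def D_def power_divide field_simps)

lemma main_eq:
  assumes n: "n \<ge> 1"
  shows "ln (Omega (n - 1) / Omega n) - (ln (real n / (2 * pi)) / 2 + (\<Sum>j=1..N. mu j / real n ^ j))
         = rr N (real n / 2)"
proof -
  define x where "x = real n / 2"
  have x0: "x > 0" using n by (simp add: x_def)
  have o1: "Omega (n - 1) = pi powr (x - 1/2) / Gamma (x + 1/2)"
  proof -
    have e1: "real (n - 1) / 2 = x - 1/2" using n by (simp add: x_def of_nat_diff field_simps)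
    have e2: "real (n - 1) / 2 + 1 = x + 1/2" using n by (simp add: x_def of_nat_diff field_simps)
    have e3: "x - 1/2 + 1 = x + 1/2" by simp
    show ?thesis unfolding Omega_def e1 e3 ..
  qed
  have o2: "Omega n = pi powr x / Gamma (x + 1)" unfolding Omega_def x_def by simp
  have g1: "Gamma (x + 1/2) > 0" "Gamma (x+1) > 0" using x0 by simp_all
  have pp: "pi powr (x - 1/2) > 0" "pi powr x > 0" by simp_all
  have "ln (Omega (n - 1) / Omega n) = ln (pi powr (x - 1/2)) - ln (Gamma (x + 1/2)) - (ln (pi powr x) - ln (Gamma (x + 1)))"
    unfolding o1 o2 using g1 pp
    by (simp only: ln_divide_pos divide_pos_pos)
  also have "\<dots> = (x - 1/2) * ln pi - ln (Gamma (x + 1/2)) - x * ln pi + ln (Gamma (x + 1))"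
    by simp
  finally have L: "ln (Omega (n - 1) / Omega n) = ln (Gamma (x + 1)) - ln (Gamma (x + 1/2)) - ln pi / 2"
    by (simp add: algebra_simps)
  have "real n / (2 * pi) = x / pi" by (simp add: x_def)
  then have L2: "ln (real n / (2 * pi)) = ln x - ln pi" using x0 by (simp add: ln_div)
  have L3: "(\<Sum>j=1..N. mu j / real n ^ j) = PP N x"
    unfolding PP_def x_def by (simp add: mu_eq)
  show ?thesis unfolding L L2 L3 rr_def ff_def x_def[symmetric] by (simp add: field_simps)
qed

theorem theorem6:
  fixes N :: nat
  shows "(\<lambda>n::nat. ln (Omega (n - 1) / Omega n)
            - (ln (real n / (2 * pi)) / 2 + (\<Sum>j=1..N. mu j / real n ^ j)))
         \<in> O(\<lambda>n. 1 / real n ^ (N + 1))"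
proof -
  obtain B where B: "\<And>x::real. x \<ge> 2 \<Longrightarrow> \<bar>rr N x\<bar> \<le> B / x^(N+1)"
    using rr_bound[of N] by blast
  show ?thesis
  proof (rule bigoI[where c = "\<bar>B\<bar> * 2^(N+1)"])
    show "\<forall>\<^sub>F n in at_top. norm (ln (Omega (n - 1) / Omega n)
            - (ln (real n / (2 * pi)) / 2 + (\<Sum>j=1..N. mu j / real n ^ j)))
          \<le> \<bar>B\<bar> * 2^(N+1) * norm (1 / real n ^ (N + 1))"
    proof (rule eventually_mono[OF eventually_ge_at_top[of "4::nat"]])
      fix n :: nat assume n: "n \<ge> 4"
      have x: "real n / 2 \<ge> 2" using n by simp
      have "norm (ln (Omega (n - 1) / Omega n)
            - (ln (real n / (2 * pi)) / 2 + (\<Sum>j=1..N. mu j / real n ^ j))) = \<bar>rr N (real n / 2)\<bar>"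
        using main_eq[of n N] n by simp
      also have "\<dots> \<le> B / (real n / 2)^(N+1)" by (rule B[OF x])
      also have "\<dots> \<le> \<bar>B\<bar> / (real n / 2)^(N+1)" using n by (intro divide_right_mono) auto
      also have "\<dots> = \<bar>B\<bar> * 2^(N+1) * norm (1 / real n ^ (N + 1))"
        using n by (simp add: power_divide)
      finally show "norm (ln (Omega (n - 1) / Omega n)
            - (ln (real n / (2 * pi)) / 2 + (\<Sum>j=1..N. mu j / real n ^ j)))
          \<le> \<bar>B\<bar> * 2^(N+1) * norm (1 / real n ^ (N + 1))" .
    qed
  qed
qed

end
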